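(* Let $\kappa$ be an uncountable regular cardinal, let $\mathcal{I}$ be a $\kappa$-complete proper ideal on $\kappa$ containing every bounded subset of $\kappa$, and let $\nu\in\{2,\kappa\}$. Then the class of basic $\mathcal{I}$-Borel subsets of ${}^{\kappa}\nu$ coincides with the class of $\kappa$-Borel subsets of ${}^{\kappa}\nu$. In particular, the class of basic $\mathcal{I}$-Borel sets does not depend on $\mathcal{I}$.
   Context: ${}^{\kappa}\nu$ is the set of functions $\kappa\to\nu$. For a function $f$ with domain contained in $\kappa$ and values in $\nu$, $\mathbf{N}_f=\{x\in{}^{\kappa}\nu: f\subseteq x\}$. A basic $\kappa$-open set is a set $\mathbf{N}_f$ with $f\colon X\to\nu$, $X\subseteq\kappa$, $|X|<\kappa$; the $\kappa$-Borel sets form the smallest class containing the basic $\kappa$-open sets and closed under complements and unions of at most $\kappa$ sets. A basic $\mathcal{I}$-open set is $\mathbf{N}_f$ with $f\colon D\to\nu$, $D\in\mathcal{I}$; the basic $\mathcal{I}$-Borel sets form the smallest class containing the basic $\mathcal{I}$-open sets and closed under complements and unions of at most $\kappa$ sets. *)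

theory Defs
  imports Main "HOL-Library.Countable_Set"
begin

unbundle cardinal_syntax

text \<open>The cardinal kappa is represented by a type 'k carrying a cardinal well-order r
  with Field r = UNIV; thus kappa = UNIV :: 'k set and the ordinals below kappa are
  the elements of 'k ordered by r.  Functions kappa -> nu are functions 'k => 'v.\<close>

definition nbhd :: "'k set \<Rightarrow> ('k \<Rightarrow> 'v) \<Rightarrow> ('k \<Rightarrow> 'v) set" where
  "nbhd X f = {x. \<forall>a\<in>X. x a = f a}"

definition basic_kappa_open :: "('k \<Rightarrow> 'v) set set" where
  "basic_kappa_open = {nbhd X f | X f. |X| <o |UNIV :: 'k set|}"

definition basic_I_open :: "'k set set \<Rightarrow> ('k \<Rightarrow> 'v) set set" where
  "basic_I_open I = {nbhd X f | X f. X \<in> I}"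

inductive_set kappa_borel_closure :: "('k \<Rightarrow> 'v) set set \<Rightarrow> ('k \<Rightarrow> 'v) set set"
  for B :: "('k \<Rightarrow> 'v) set set" where
  basic: "A \<in> B \<Longrightarrow> A \<in> kappa_borel_closure B"
| compl: "A \<in> kappa_borel_closure B \<Longrightarrow> - A \<in> kappa_borel_closure B"
| union: "F \<in> Pow (kappa_borel_closure B) \<Longrightarrow> |F| \<le>o |UNIV :: 'k set|
           \<Longrightarrow> \<Union>F \<in> kappa_borel_closure B"
  monos Pow_mono

definition kappa_Borel :: "('k \<Rightarrow> 'v) set set" where
  "kappa_Borel = kappa_borel_closure basic_kappa_open"

definition I_Borel :: "'k set set \<Rightarrow> ('k \<Rightarrow> 'v) set set" where
  "I_Borel I = kappa_borel_closure (basic_I_open I)"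

definition bounded_in :: "'k rel \<Rightarrow> 'k set \<Rightarrow> bool" where
  "bounded_in r A \<longleftrightarrow> (\<exists>\<beta>. \<forall>\<alpha>\<in>A. (\<alpha>, \<beta>) \<in> r)"

definition kappa_complete_proper_ideal :: "'k rel \<Rightarrow> 'k set set \<Rightarrow> bool" where
  "kappa_complete_proper_ideal r I \<longleftrightarrow>
     (\<forall>A\<in>I. \<forall>B. B \<subseteq> A \<longrightarrow> B \<in> I) \<and>
     (\<forall>F. F \<subseteq> I \<and> |F| <o r \<longrightarrow> \<Union>F \<in> I) \<and>
     UNIV \<notin> I"

end

theory Submission
  imports Defs
begin

lemma closure_sub:
  assumes "\<And>A. A \<in> B \<Longrightarrow> A \<in> kappa_borel_closure C"
  shows "kappa_borel_closure B \<subseteq> kappa_borel_closure C"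
proof
  fix A assume "A \<in> kappa_borel_closure B"
  then show "A \<in> kappa_borel_closure C"
  proof (induction rule: kappa_borel_closure.induct)
    case (basic A) then show ?case using assms by blast
  next
    case (compl A) then show ?case by (blast intro: kappa_borel_closure.compl)
  next
    case (union F)
    have "F \<in> Pow (kappa_borel_closure C)" using union by blast
    then show ?case using union by (blast intro: kappa_borel_closure.union)
  qed
qed

lemma small_bounded:
  fixes r :: "'k rel"
  assumes card: "Card_order r" and field: "Field r = UNIV"
    and regular: "regularCard r"
    and X: "|X| <o |UNIV :: 'k set|"
  shows "bounded_in r X"
proof (rule ccontr)
  assume nb: "\<not> bounded_in r X"
  have wo: "Well_order r" using card card_order_on_well_order_on by blast
  have refl: "\<And>a. (a,a) \<in> r" using wo field
    unfolding well_order_on_def linear_order_on_def partial_order_on_def preorder_on_def refl_on_def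
    by auto
  have tot: "\<And>a b. a \<noteq> b \<Longrightarrow> (a,b) \<in> r \<or> (b,a) \<in> r" using wo field
    unfolding well_order_on_def linear_order_on_def total_on_def by auto
  have "cofinal X r"
    unfolding cofinal_def
  proof
    fix a assume "a \<in> Field r"
    from nb obtain b where b: "b \<in> X" "(b,a) \<notin> r" unfolding bounded_in_def by blast
    then have "a \<noteq> b" using refl by blast
    then show "\<exists>b\<in>X. a \<noteq> b \<and> (a, b) \<in> r" using b tot by blast
  qed
  then have "|X| =o r" using regular field unfolding regularCard_def by blast
  moreover have "|UNIV :: 'k set| =o r" using card_of_Field_ordIso[OF card] field by simp
  ultimately have "|X| =o |UNIV :: 'k set|" by (rule ordIso_transitive[OF _ ordIso_symmetric])
  then show False by (rule notE[OF not_ordLess_ordIso[OF X]])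
qed

lemma nbhd_eq: "nbhd X f = - \<Union> ((\<lambda>a. - nbhd {a} f) ` X)"
  unfolding nbhd_def by auto

lemma main:
  fixes r :: "'k rel" and I :: "'k set set"
  assumes card: "Card_order r" and field: "Field r = UNIV"
    and uncountable: "\<not> countable (UNIV :: 'k set)"
    and regular: "regularCard r"
    and bdd: "\<And>A. bounded_in r A \<Longrightarrow> A \<in> I"
  shows "(I_Borel I :: ('k \<Rightarrow> 'v) set set) = kappa_Borel"
proof
  have inf: "infinite (UNIV :: 'k set)" using uncountable countable_finite by blast
  show "(I_Borel I :: ('k \<Rightarrow> 'v) set set) \<subseteq> kappa_Borel"
    unfolding I_Borel_def kappa_Borel_def
  proof (rule closure_sub)
    fix A :: "('k \<Rightarrow> 'v) set" assume "A \<in> basic_I_open I"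
    then obtain X f where A: "A = nbhd X f" unfolding basic_I_open_def by blast
    have single: "nbhd {a} f \<in> kappa_borel_closure basic_kappa_open" for a
    proof (rule kappa_borel_closure.basic)
      have "|{a}| <o |UNIV :: 'k set|" by (rule finite_ordLess_infinite[OF card_of_Well_order card_of_Well_order, unfolded Field_card_of])
           (simp_all add: inf)
      then show "nbhd {a} f \<in> basic_kappa_open" unfolding basic_kappa_open_def by blast
    qed
    have "(\<lambda>a. - nbhd {a} f) ` X \<in> Pow (kappa_borel_closure basic_kappa_open)"
      using kappa_borel_closure.compl[OF single] by blast
    moreover have "|(\<lambda>a. - nbhd {a} f) ` X| \<le>o |UNIV :: 'k set|"
      by (rule ordLeq_transitive[OF card_of_image card_of_mono1[OF subset_UNIV]])
    ultimately have "\<Union> ((\<lambda>a. - nbhd {a} f) ` X) \<in> kappa_borel_closure basic_kappa_open"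
      by (rule kappa_borel_closure.union)
    then show "A \<in> kappa_borel_closure basic_kappa_open"
      unfolding A nbhd_eq[of X f] by (rule kappa_borel_closure.compl)
  qed
  show "kappa_Borel \<subseteq> (I_Borel I :: ('k \<Rightarrow> 'v) set set)"
    unfolding I_Borel_def kappa_Borel_def
  proof (rule closure_sub)
    fix A :: "('k \<Rightarrow> 'v) set" assume "A \<in> basic_kappa_open"
    then obtain X f where A: "A = nbhd X f" and X: "|X| <o |UNIV :: 'k set|"
      unfolding basic_kappa_open_def by blast
    have "X \<in> I" using bdd small_bounded[OF card field regular X] by blast
    then have "A \<in> basic_I_open I" unfolding A basic_I_open_def by auto
    then show "A \<in> kappa_borel_closure (basic_I_open I)"
      by (rule kappa_borel_closure.basic)
  qed
qed

theorem fact4p14: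
  fixes r :: "'k rel" and I :: "'k set set"
  assumes card: "Card_order r" and field: "Field r = UNIV"
    and uncountable: "\<not> countable (UNIV :: 'k set)"
    and regular: "regularCard r"
    and ideal: "kappa_complete_proper_ideal r I"
    and bdd: "\<And>A. bounded_in r A \<Longrightarrow> A \<in> I"
  shows "((I_Borel I :: ('k \<Rightarrow> bool) set set) = kappa_Borel)
       \<and> ((I_Borel I :: ('k \<Rightarrow> 'k) set set) = kappa_Borel)"
  using main[OF card field uncountable regular bdd, where 'v=bool]
    main[OF card field uncountable regular bdd, where 'v='k] by (rule conjI)

end
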